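(* Let $(X,Y)$ be distributed according to an $(\alpha,\lambda)$-locally consistent RBM with $\alpha>0$. Let $u\neq v\in V_{obs}$ be such that there is a latent node $k\in V_{lat}$ with $J_{uk}\neq0$ and $J_{vk}\ne0$, and let $S\subseteq V_{obs}\setminus\{u,v\}$. Then \[ \mathrm{Cov}^{\mathrm{avg}}(u,v\mid S)\;\ge\;\alpha^2e^{-12\lambda}. \]
   Context: A Restricted Boltzmann Machine (RBM) with $n$ observed variables $X\in\{\pm1\}^n$ (indexed by $V_{obs}=[n]$) and $m$ latent variables $Y\in\{\pm1\}^m$ (indexed by $V_{lat}=[m]$) is the distribution $\Pr[X=x,Y=y]=\frac1Z\exp(x^TJy+h^Tx+g^Ty)$, where $J\in\mathbb R^{n\times m}$, $h\in\mathbb R^n$, $g\in\mathbb R^m$ are arbitrary and $Z$ is the normalizing constant. Its edge set is $E=\{(i,j):J_{ij}\neq0\}$. The RBM is $(\alpha,\lambda)$-locally consistent if: (i) for each $j\in[m]$, either $J_{ij}\ge0$ for all $i$ or $J_{ij}\le0$ for all $i$; (ii) $|J_{ij}|\ge\alpha$ for every $(i,j)\in E$; (iii) $\sum_j|J_{ij}|+|h_i|\le\lambda$ for all $i\in[n]$; (iv) $\sum_i|J_{ij}|+|g_j|\le\lambda$ for all $j\in[m]$. For observed $u,v$ and $S\subseteq V_{obs}\setminus\{u,v\}$ with configuration $x_S$, $\mathrm{Cov}(u,v\mid X_S=x_S)=\mathbb E[X_uX_v\mid X_S=x_S]-\mathbb E[X_u\mid X_S=x_S]\,\mathbb E[X_v\mid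 X_S=x_S]$, and the average conditional covariance is $\mathrm{Cov}^{\mathrm{avg}}(u,v\mid S)=\mathbb E_{x_S}[\mathrm{Cov}(u,v\mid X_S=x_S)]$, where $x_S$ is drawn from the marginal law of $X_S$. *)

theory Defs
  imports "HOL-Analysis.Analysis"
begin

text \<open>Indices: observed nodes are 0..<n, latent nodes 0..<m.
 A spin configuration on k nodes is a function nat => real taking values in {-1,1}
 on {..<k} and 0 elsewhere (extensional convention).\<close>

definition spins :: "nat \<Rightarrow> (nat \<Rightarrow> real) set" where
  "spins k = {x. (\<forall>i<k. x i = 1 \<or> x i = -1) \<and> (\<forall>i\<ge>k. x i = 0)}"

definition rbm_weight :: "nat \<Rightarrow> nat \<Rightarrow> (nat \<Rightarrow> nat \<Rightarrow> real) \<Rightarrow> (nat \<Rightarrow> real) \<Rightarrow> (nat \<Rightarrow> real)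
    \<Rightarrow> (nat \<Rightarrow> real) \<Rightarrow> (nat \<Rightarrow> real) \<Rightarrow> real" where
  "rbm_weight n m J h g x y =
     exp ((\<Sum>i<n. \<Sum>j<m. x i * J i j * y j) + (\<Sum>i<n. h i * x i) + (\<Sum>j<m. g j * y j))"

definition rbm_Z :: "nat \<Rightarrow> nat \<Rightarrow> (nat \<Rightarrow> nat \<Rightarrow> real) \<Rightarrow> (nat \<Rightarrow> real) \<Rightarrow> (nat \<Rightarrow> real) \<Rightarrow> real" where
  "rbm_Z n m J h g = (\<Sum>x\<in>spins n. \<Sum>y\<in>spins m. rbm_weight n m J h g x y)"

definition rbm_pX :: "nat \<Rightarrow> nat \<Rightarrow> (nat \<Rightarrow> nat \<Rightarrow> real) \<Rightarrow> (nat \<Rightarrow> real) \<Rightarrow> (nat \<Rightarrow> real)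
    \<Rightarrow> (nat \<Rightarrow> real) \<Rightarrow> real" where
  "rbm_pX n m J h g x = (\<Sum>y\<in>spins m. rbm_weight n m J h g x y) / rbm_Z n m J h g"

definition rbm_condE :: "nat \<Rightarrow> nat \<Rightarrow> (nat \<Rightarrow> nat \<Rightarrow> real) \<Rightarrow> (nat \<Rightarrow> real) \<Rightarrow> (nat \<Rightarrow> real)
    \<Rightarrow> nat set \<Rightarrow> (nat \<Rightarrow> real) \<Rightarrow> ((nat \<Rightarrow> real) \<Rightarrow> real) \<Rightarrow> real" where
  "rbm_condE n m J h g S xS f =
     (let A = {x\<in>spins n. \<forall>i\<in>S. x i = xS i} in
      (\<Sum>x\<in>A. rbm_pX n m J h g x * f x) / (\<Sum>x\<in>A. rbm_pX n m J h g x))"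

definition rbm_condCov :: "nat \<Rightarrow> nat \<Rightarrow> (nat \<Rightarrow> nat \<Rightarrow> real) \<Rightarrow> (nat \<Rightarrow> real) \<Rightarrow> (nat \<Rightarrow> real)
    \<Rightarrow> nat \<Rightarrow> nat \<Rightarrow> nat set \<Rightarrow> (nat \<Rightarrow> real) \<Rightarrow> real" where
  "rbm_condCov n m J h g u v S xS =
     rbm_condE n m J h g S xS (\<lambda>x. x u * x v)
     - rbm_condE n m J h g S xS (\<lambda>x. x u) * rbm_condE n m J h g S xS (\<lambda>x. x v)"

text \<open>Drawing x_S from the marginal of X_S is the same as drawing the full X and
 restricting to S, so we average Cov(u,v | X_S = X|_S) over X ~ marginal law.\<close>
definition rbm_avgCov :: "nat \<Rightarrow> nat \<Rightarrow> (nat \<Rightarrow> nat \<Rightarrow> real) \<Rightarrow> (nat \<Rightarrow> real) \<Rightarrow> (nat \<Rightarrow> real)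
    \<Rightarrow> nat \<Rightarrow> nat \<Rightarrow> nat set \<Rightarrow> real" where
  "rbm_avgCov n m J h g u v S =
     (\<Sum>x\<in>spins n. rbm_pX n m J h g x * rbm_condCov n m J h g u v S x)"

definition locally_consistent :: "nat \<Rightarrow> nat \<Rightarrow> (nat \<Rightarrow> nat \<Rightarrow> real) \<Rightarrow> (nat \<Rightarrow> real) \<Rightarrow> (nat \<Rightarrow> real)
    \<Rightarrow> real \<Rightarrow> real \<Rightarrow> bool" where
  "locally_consistent n m J h g alpha lam \<longleftrightarrow>
     (\<forall>j<m. (\<forall>i<n. J i j \<ge> 0) \<or> (\<forall>i<n. J i j \<le> 0)) \<and>
     (\<forall>i<n. \<forall>j<m. J i j \<noteq> 0 \<longrightarrow> \<bar>J i j\<bar> \<ge> alpha) \<and>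
     (\<forall>i<n. (\<Sum>j<m. \<bar>J i j\<bar>) + \<bar>h i\<bar> \<le> lam) \<and>
     (\<forall>j<m. (\<Sum>i<n. \<bar>J i j\<bar>) + \<bar>g j\<bar> \<le> lam)"

end

theory Submission
  imports Defs "HOL-Library.FuncSet"
begin



lemma alg_decomp: fixes a b f0 f1 g0 g1 :: real assumes "a + b \<noteq> 0"
  shows "a*f0*g0 + b*f1*g1 = (a+b) * ((a*f0+b*f1)/(a+b)) * ((a*g0+b*g1)/(a+b)) + a*b/(a+b)*(f1-f0)*(g1-g0)"
proof -
  have "(a+b) * ((a*f0+b*f1)/(a+b)) * ((a*g0+b*g1)/(a+b)) = (a*f0+b*f1)*(a*g0+b*g1)/(a+b)"
    using assms by (simp add: power2_eq_square)
  moreover have "a*b/(a+b)*(f1-f0)*(g1-g0) = a*b*(f1-f0)*(g1-g0)/(a+b)" by simp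
  moreover have "(a*f0+b*f1)*(a*g0+b*g1) + a*b*(f1-f0)*(g1-g0) = (a+b)*(a*f0*g0 + b*f1*g1)"
    by (simp add: algebra_simps)
  ultimately show ?thesis using assms by (simp add: add_divide_distrib[symmetric])
qed
lemma conv_form: fixes a b f0 f1 :: real assumes "a + b \<noteq> 0"
  shows "(a*f0 + b*f1)/(a+b) = (1 - b/(a+b))*f0 + b/(a+b)*f1"
proof -
  have "1 - b/(a+b) = a/(a+b)" using assms by (simp add: field_simps)
  then show ?thesis by (simp add: add_divide_distrib)
qed
lemma ratio_mono: fixes a b c d :: real assumes "0<a" "0<b" "0<c" "0<d" "b*c \<le> d*a"
  shows "b/(a+b) \<le> d/(c+d)"
proof -
  have "b*(c+d) \<le> d*(a+b)" using assms(5) by (simp add: algebra_simps)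
  then show ?thesis using assms by (simp add: divide_simps)
qed

lemma four_num:
  fixes a0 a1 b0 b1 c0 c1 d0 d1 :: real
  assumes nn: "0 \<le> a0" "0 \<le> a1" "0 \<le> b0" "0 \<le> b1" "0 \<le> c0" "0 \<le> c1" "0 \<le> d0" "0 \<le> d1"
    and h1: "a0*b0 \<le> c0*d0" and h2: "a0*b1 \<le> c1*d0" and h3: "a1*b0 \<le> c1*d0" and h4: "a1*b1 \<le> c1*d1"
  shows "(a0+a1)*(b0+b1) \<le> (c0+c1)*(d0+d1)"
proof -
  have key: "a0*b1 + a1*b0 \<le> c1*d0 + c0*d1"
  proof (cases "c1*d0 = 0")
    case True
    have "0 \<le> a0*b1" "0 \<le> a1*b0" "0 \<le> c0*d1" using nn by simp_all
    then show ?thesis using h2 h3 True by linarith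
  next
    case False
    define P where "P = c1*d0"
    define p where "p = a0*b1"
    define q where "q = a1*b0"
    define R where "R = c0*d1"
    have Ppos: "P > 0" using False nn unfolding P_def by (simp add: less_le)
    have "0 \<le> (P - p)*(P - q)" using h2 h3 unfolding P_def p_def q_def
      by (intro mult_nonneg_nonneg) auto
    moreover have "p*q \<le> P*R"
    proof -
      have "p*q = (a0*b0)*(a1*b1)" unfolding p_def q_def by (simp add: algebra_simps)
      also have "\<dots> \<le> (c0*d0)*(c1*d1)" by (rule mult_mono[OF h1 h4]) (use nn in simp_all)
      also have "\<dots> = P*R" unfolding P_def R_def by (simp add: algebra_simps)
      finally show ?thesis .
    qed
    ultimately have "P*(p+q) \<le> P*(P+R)" by (simp add: algebra_simps)
    then have "p + q \<le> P + R" using Ppos by simp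
    then show ?thesis unfolding P_def p_def q_def R_def by simp
  qed
  have "(a0+a1)*(b0+b1) = a0*b0 + (a0*b1 + a1*b0) + a1*b1" by (simp add: algebra_simps)
  also have "\<dots> \<le> c0*d0 + (c1*d0 + c0*d1) + c1*d1" using h1 key h4 by linarith
  also have "\<dots> = (c0+c1)*(d0+d1)" by (simp add: algebra_simps)
  finally show ?thesis .
qed

lemma sum_Pow_insert:
  assumes "finite I" "a \<notin> I"
  shows "sum f (Pow (insert a I)) = (\<Sum>A\<in>Pow I. f A + f (insert a A))"
proof -
  have inj: "inj_on (insert a) (Pow I)" using assms(2) unfolding inj_on_def
    by (metis PowD Set.set_insert insert_ident subsetD)
  have disj: "Pow I \<inter> insert a ` Pow I = {}" using assms(2) by auto
  have "sum f (Pow (insert a I)) = sum f (Pow I \<union> insert a ` Pow I)" by (simp add: Pow_insert)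
  also have "\<dots> = sum f (Pow I) + sum f (insert a ` Pow I)"
    using assms(1) disj by (intro sum.union_disjoint) auto
  also have "sum f (insert a ` Pow I) = (\<Sum>A\<in>Pow I. f (insert a A))"
    using inj by (simp add: sum.reindex)
  finally show ?thesis by (simp add: sum.distrib)
qed

lemma AD:
  fixes f1 f2 f3 f4 :: "'a set \<Rightarrow> real"
  assumes "finite I"
    and "\<And>A B. A \<subseteq> I \<Longrightarrow> B \<subseteq> I \<Longrightarrow> f1 A * f2 B \<le> f3 (A \<union> B) * f4 (A \<inter> B)"
    and "\<And>A. A \<subseteq> I \<Longrightarrow> 0 \<le> f1 A \<and> 0 \<le> f2 A \<and> 0 \<le> f3 A \<and> 0 \<le> f4 A"
  shows "sum f1 (Pow I) * sum f2 (Pow I) \<le> sum f3 (Pow I) * sum f4 (Pow I)"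
  using assms
proof (induction I arbitrary: f1 f2 f3 f4 rule: finite_induct)
  case empty
  then show ?case by simp
next
  case (insert a I)
  define g1 where "g1 A = f1 A + f1 (insert a A)" for A
  define g2 where "g2 A = f2 A + f2 (insert a A)" for A
  define g3 where "g3 A = f3 A + f3 (insert a A)" for A
  define g4 where "g4 A = f4 A + f4 (insert a A)" for A
  have "sum g1 (Pow I) * sum g2 (Pow I) \<le> sum g3 (Pow I) * sum g4 (Pow I)"
  proof (rule insert.IH)
    fix A B assume AB: "A \<subseteq> I" "B \<subseteq> I"
    have aA: "a \<notin> A" "a \<notin> B" using AB insert.hyps by auto
    have s1: "insert a A \<union> B = insert a (A \<union> B)" "A \<union> insert a B = insert a (A \<union> B)"
      "insert a A \<union> insert a B = insert a (A \<union> B)" by auto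
    have s2: "insert a A \<inter> B = A \<inter> B" "A \<inter> insert a B = A \<inter> B"
      "insert a A \<inter> insert a B = insert a (A \<inter> B)" using aA by auto
    have sub: "A \<subseteq> insert a I" "B \<subseteq> insert a I" "insert a A \<subseteq> insert a I" "insert a B \<subseteq> insert a I"
      "A \<union> B \<subseteq> insert a I" "A \<inter> B \<subseteq> insert a I" "insert a (A \<union> B) \<subseteq> insert a I"
      "insert a (A \<inter> B) \<subseteq> insert a I" using AB by auto
    show "g1 A * g2 B \<le> g3 (A \<union> B) * g4 (A \<inter> B)"
      unfolding g1_def g2_def g3_def g4_def
    proof (rule four_num)
      show "f1 A * f2 B \<le> f3 (A \<union> B) * f4 (A \<inter> B)" using insert.prems(1) sub by blast
      show "f1 A * f2 (insert a B) \<le> f3 (insert a (A \<union> B)) * f4 (A \<inter> B)"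
        using insert.prems(1)[OF sub(1) sub(4)] s1 s2 by simp
      show "f1 (insert a A) * f2 B \<le> f3 (insert a (A \<union> B)) * f4 (A \<inter> B)"
        using insert.prems(1)[OF sub(3) sub(2)] s1 s2 by simp
      show "f1 (insert a A) * f2 (insert a B) \<le> f3 (insert a (A \<union> B)) * f4 (insert a (A \<inter> B))"
        using insert.prems(1)[OF sub(3) sub(4)] s1 s2 by simp
    qed (use insert.prems(2) sub in blast)+
  next
    fix A assume "A \<subseteq> I"
    then have "A \<subseteq> insert a I" "insert a A \<subseteq> insert a I" by auto
    then show "0 \<le> g1 A \<and> 0 \<le> g2 A \<and> 0 \<le> g3 A \<and> 0 \<le> g4 A"
      unfolding g1_def g2_def g3_def g4_def using insert.prems(2) by (meson add_nonneg_nonneg)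
  qed
  then show ?case
    unfolding g1_def g2_def g3_def g4_def sum_Pow_insert[OF insert.hyps] .
qed




lemma FKG:
  fixes M \<phi> \<psi> :: "'a set \<Rightarrow> real"
  assumes fin: "finite I"
    and Mnn: "\<And>A. A \<subseteq> I \<Longrightarrow> 0 \<le> M A"
    and lsm: "\<And>A B. A \<subseteq> I \<Longrightarrow> B \<subseteq> I \<Longrightarrow> M A * M B \<le> M (A \<union> B) * M (A \<inter> B)"
    and m1: "\<And>A B. A \<subseteq> B \<Longrightarrow> B \<subseteq> I \<Longrightarrow> \<phi> A \<le> \<phi> B"
    and m2: "\<And>A B. A \<subseteq> B \<Longrightarrow> B \<subseteq> I \<Longrightarrow> \<psi> A \<le> \<psi> B"
  shows "(\<Sum>A\<in>Pow I. M A * \<phi> A) * (\<Sum>A\<in>Pow I. M A * \<psi> A)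
         \<le> (\<Sum>A\<in>Pow I. M A) * (\<Sum>A\<in>Pow I. M A * \<phi> A * \<psi> A)"
proof -
  define a where "a = \<phi> {}"
  define b where "b = \<psi> {}"
  have pa: "0 \<le> \<phi> A - a" if "A \<subseteq> I" for A using m1[of "{}" A] that unfolding a_def by simp
  have pb: "0 \<le> \<psi> A - b" if "A \<subseteq> I" for A using m2[of "{}" A] that unfolding b_def by simp
  define SM where "SM = (\<Sum>A\<in>Pow I. M A)"
  define SF where "SF = (\<Sum>A\<in>Pow I. M A * \<phi> A)"
  define SG where "SG = (\<Sum>A\<in>Pow I. M A * \<psi> A)"
  define SFG where "SFG = (\<Sum>A\<in>Pow I. M A * \<phi> A * \<psi> A)"
  have "(\<Sum>A\<in>Pow I. M A * (\<phi> A - a)) * (\<Sum>A\<in>Pow I. M A * (\<psi> A - b))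
      \<le> (\<Sum>A\<in>Pow I. M A * (\<phi> A - a) * (\<psi> A - b)) * (\<Sum>A\<in>Pow I. M A)"
  proof (rule AD[OF fin])
    fix A B assume AB: "A \<subseteq> I" "B \<subseteq> I"
    have U: "A \<union> B \<subseteq> I" "A \<inter> B \<subseteq> I" using AB by auto
    have "M A * (\<phi> A - a) * (M B * (\<psi> B - b)) = (M A * M B) * ((\<phi> A - a) * (\<psi> B - b))"
      by (simp add: algebra_simps)
    also have "\<dots> \<le> (M (A \<union> B) * M (A \<inter> B)) * ((\<phi> (A \<union> B) - a) * (\<psi> (A \<union> B) - b))"
    proof (rule mult_mono)
      show "M A * M B \<le> M (A \<union> B) * M (A \<inter> B)" using lsm AB .
      show "(\<phi> A - a) * (\<psi> B - b) \<le> (\<phi> (A \<union> B) - a) * (\<psi> (A \<union> B) - b)"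
        using m1[of A "A \<union> B"] m2[of B "A \<union> B"] U pa[OF AB(1)] pb[OF AB(2)]
        by (intro mult_mono) auto
      show "0 \<le> M (A \<union> B) * M (A \<inter> B)" using Mnn U by simp
      show "0 \<le> (\<phi> A - a) * (\<psi> B - b)" using pa pb AB by simp
    qed
    also have "\<dots> = M (A \<union> B) * (\<phi> (A \<union> B) - a) * (\<psi> (A \<union> B) - b) * M (A \<inter> B)"
      by (simp add: algebra_simps)
    finally show "M A * (\<phi> A - a) * (M B * (\<psi> B - b))
        \<le> M (A \<union> B) * (\<phi> (A \<union> B) - a) * (\<psi> (A \<union> B) - b) * M (A \<inter> B)" .
  next
    fix A assume "A \<subseteq> I"
    then show "0 \<le> M A * (\<phi> A - a) \<and> 0 \<le> M A * (\<psi> A - b) \<and> 0 \<le> M A * (\<phi> A - a) * (\<psi> A - b) \<and> 0 \<le> M A"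
      using Mnn pa pb by simp
  qed
  moreover have "(\<Sum>A\<in>Pow I. M A * (\<phi> A - a)) = SF - a * SM"
    unfolding SF_def SM_def by (simp add: algebra_simps sum_subtractf sum_distrib_left)
  moreover have "(\<Sum>A\<in>Pow I. M A * (\<psi> A - b)) = SG - b * SM"
    unfolding SG_def SM_def by (simp add: algebra_simps sum_subtractf sum_distrib_left)
  moreover have "(\<Sum>A\<in>Pow I. M A * (\<phi> A - a) * (\<psi> A - b)) = SFG - b * SF - a * SG + a * b * SM"
  proof -
    have "(\<Sum>A\<in>Pow I. M A * (\<phi> A - a) * (\<psi> A - b))
        = (\<Sum>A\<in>Pow I. M A * \<phi> A * \<psi> A - b * (M A * \<phi> A) - a * (M A * \<psi> A) + a * b * M A)"
      by (intro sum.cong) (auto simp: algebra_simps)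
    also have "\<dots> = SFG - b * SF - a * SG + a * b * SM"
      unfolding SFG_def SF_def SG_def SM_def
      by (simp add: sum.distrib sum_subtractf sum_distrib_left)
    finally show ?thesis .
  qed
  ultimately have "(SF - a * SM) * (SG - b * SM) \<le> (SFG - b * SF - a * SG + a * b * SM) * SM" by (simp add: SM_def)
  moreover have "(SFG - b * SF - a * SG + a * b * SM) * SM - (SF - a * SM) * (SG - b * SM) = SFG * SM - SF * SG"
    by (simp add: algebra_simps)
  ultimately have "SF * SG \<le> SM * SFG" by (simp add: algebra_simps)
  then show ?thesis unfolding SF_def SG_def SM_def SFG_def .
qed




lemma lin_rearr: fixes s t c p q :: real shows "s * (t + c) - p * q = (s * t - p * q) + s * c"
  by (simp add: algebra_simps)

lemma decomp:
  fixes \<nu> f g :: "'a set \<Rightarrow> real"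
  assumes fin: "finite I" and kI: "k \<notin> I"
    and pos: "\<And>A. A \<subseteq> insert k I \<Longrightarrow> 0 < \<nu> A"
    and lsm: "\<And>A B. A \<subseteq> insert k I \<Longrightarrow> B \<subseteq> insert k I \<Longrightarrow> \<nu> A * \<nu> B \<le> \<nu> (A \<union> B) * \<nu> (A \<inter> B)"
    and mf: "\<And>A B. A \<subseteq> B \<Longrightarrow> B \<subseteq> insert k I \<Longrightarrow> f A \<le> f B"
    and mg: "\<And>A B. A \<subseteq> B \<Longrightarrow> B \<subseteq> insert k I \<Longrightarrow> g A \<le> g B"
  shows "(\<Sum>A\<in>Pow (insert k I). \<nu> A) *
           (\<Sum>Z\<in>Pow I. \<nu> Z * \<nu> (insert k Z) / (\<nu> Z + \<nu> (insert k Z)) *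
               (f (insert k Z) - f Z) * (g (insert k Z) - g Z))
         \<le> (\<Sum>A\<in>Pow (insert k I). \<nu> A) * (\<Sum>A\<in>Pow (insert k I). \<nu> A * f A * g A)
           - (\<Sum>A\<in>Pow (insert k I). \<nu> A * f A) * (\<Sum>A\<in>Pow (insert k I). \<nu> A * g A)"
proof -
  define M where "M Z = \<nu> Z + \<nu> (insert k Z)" for Z
  define \<phi> where "\<phi> Z = (\<nu> Z * f Z + \<nu> (insert k Z) * f (insert k Z)) / M Z" for Z
  define \<psi> where "\<psi> Z = (\<nu> Z * g Z + \<nu> (insert k Z) * g (insert k Z)) / M Z" for Z
  define C where "C Z = \<nu> Z * \<nu> (insert k Z) / (\<nu> Z + \<nu> (insert k Z)) *
               (f (insert k Z) - f Z) * (g (insert k Z) - g Z)" for Z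
  have sub: "Z \<subseteq> insert k I" "insert k Z \<subseteq> insert k I" if "Z \<subseteq> I" for Z using that by auto
  have Mpos: "0 < M Z" if "Z \<subseteq> I" for Z using pos[OF sub(1)[OF that]] pos[OF sub(2)[OF that]]
    unfolding M_def by simp
  have e0: "(\<Sum>A\<in>Pow (insert k I). \<nu> A) = (\<Sum>Z\<in>Pow I. M Z)"
    unfolding sum_Pow_insert[OF fin kI] M_def by (rule refl)
  have e1: "(\<Sum>A\<in>Pow (insert k I). \<nu> A * f A) = (\<Sum>Z\<in>Pow I. M Z * \<phi> Z)"
    unfolding sum_Pow_insert[OF fin kI]
  proof (intro sum.cong refl)
    fix Z assume "Z \<in> Pow I" then have "0 < M Z" using Mpos by simp
    then have "M Z \<noteq> 0" by simp
    then show "\<nu> Z * f Z + \<nu> (insert k Z) * f (insert k Z) = M Z * \<phi> Z" by (simp add: \<phi>_def)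
  qed
  have e2: "(\<Sum>A\<in>Pow (insert k I). \<nu> A * g A) = (\<Sum>Z\<in>Pow I. M Z * \<psi> Z)"
    unfolding sum_Pow_insert[OF fin kI]
  proof (intro sum.cong refl)
    fix Z assume "Z \<in> Pow I" then have "0 < M Z" using Mpos by simp
    then have "M Z \<noteq> 0" by simp
    then show "\<nu> Z * g Z + \<nu> (insert k Z) * g (insert k Z) = M Z * \<psi> Z" by (simp add: \<psi>_def)
  qed
  have e3: "(\<Sum>A\<in>Pow (insert k I). \<nu> A * f A * g A) = (\<Sum>Z\<in>Pow I. M Z * \<phi> Z * \<psi> Z) + (\<Sum>Z\<in>Pow I. C Z)"
    unfolding sum_Pow_insert[OF fin kI] sum.distrib[symmetric]
  proof (intro sum.cong refl)
    fix Z assume "Z \<in> Pow I"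
    then have Mp: "0 < M Z" using Mpos by simp
    then have Mp': "\<nu> Z + \<nu> (insert k Z) \<noteq> 0" unfolding M_def by simp
    show "\<nu> Z * f Z * g Z + \<nu> (insert k Z) * f (insert k Z) * g (insert k Z) = M Z * \<phi> Z * \<psi> Z + C Z"
      unfolding \<phi>_def \<psi>_def C_def M_def by (rule alg_decomp[OF Mp'])
  qed
  have fkg: "(\<Sum>Z\<in>Pow I. M Z * \<phi> Z) * (\<Sum>Z\<in>Pow I. M Z * \<psi> Z)
         \<le> (\<Sum>Z\<in>Pow I. M Z) * (\<Sum>Z\<in>Pow I. M Z * \<phi> Z * \<psi> Z)"
  proof (rule FKG[OF fin])
    fix A assume "A \<subseteq> I" then show "0 \<le> M A" using Mpos by (simp add: less_imp_le)
  next
    fix A B assume AB: "A \<subseteq> I" "B \<subseteq> I"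
    have kA: "k \<notin> A" "k \<notin> B" using AB kI by auto
    have s1: "insert k A \<union> B = insert k (A \<union> B)" "A \<union> insert k B = insert k (A \<union> B)"
      "insert k A \<union> insert k B = insert k (A \<union> B)" by auto
    have s2: "insert k A \<inter> B = A \<inter> B" "A \<inter> insert k B = A \<inter> B"
      "insert k A \<inter> insert k B = insert k (A \<inter> B)" using kA by auto
    have su: "A \<union> B \<subseteq> I" "A \<inter> B \<subseteq> I" using AB by auto
    show "M A * M B \<le> M (A \<union> B) * M (A \<inter> B)"
      unfolding M_def
    proof (rule four_num)
      show "\<nu> A * \<nu> B \<le> \<nu> (A \<union> B) * \<nu> (A \<inter> B)" using lsm sub AB by blast
      show "\<nu> A * \<nu> (insert k B) \<le> \<nu> (insert k (A \<union> B)) * \<nu> (A \<inter> B)"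
        using lsm[OF sub(1)[OF AB(1)] sub(2)[OF AB(2)]] s1 s2 by simp
      show "\<nu> (insert k A) * \<nu> B \<le> \<nu> (insert k (A \<union> B)) * \<nu> (A \<inter> B)"
        using lsm[OF sub(2)[OF AB(1)] sub(1)[OF AB(2)]] s1 s2 by simp
      show "\<nu> (insert k A) * \<nu> (insert k B) \<le> \<nu> (insert k (A \<union> B)) * \<nu> (insert k (A \<inter> B))"
        using lsm[OF sub(2)[OF AB(1)] sub(2)[OF AB(2)]] s1 s2 by simp
    next
      show "0 \<le> \<nu> A" "0 \<le> \<nu> B" "0 \<le> \<nu> (insert k A)" "0 \<le> \<nu> (insert k B)"
        "0 \<le> \<nu> (A \<union> B)" "0 \<le> \<nu> (A \<inter> B)" "0 \<le> \<nu> (insert k (A \<union> B))"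
        "0 \<le> \<nu> (insert k (A \<inter> B))"
        using pos[OF sub(1)[OF AB(1)]] pos[OF sub(1)[OF AB(2)]] pos[OF sub(2)[OF AB(1)]]
          pos[OF sub(2)[OF AB(2)]] pos[OF sub(1)[OF su(1)]] pos[OF sub(1)[OF su(2)]]
          pos[OF sub(2)[OF su(1)]] pos[OF sub(2)[OF su(2)]] by simp_all
    qed
  next
    show "\<phi> A \<le> \<phi> B" "\<psi> A \<le> \<psi> B" if AB: "A \<subseteq> B" "B \<subseteq> I" for A B
    proof -
      have AI: "A \<subseteq> I" using AB by auto
      have kB: "k \<notin> B" "k \<notin> A" using AB kI by auto
      define pA where "pA = \<nu> (insert k A) / M A"
      define pB where "pB = \<nu> (insert k B) / M B"
      have MA: "0 < M A" "0 < M B" using Mpos AI AB by auto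
      have nA: "0 < \<nu> A" "0 < \<nu> (insert k A)" "0 < \<nu> B" "0 < \<nu> (insert k B)"
        using pos sub AI AB by auto
      have pA01: "0 \<le> pA" "pA \<le> 1" unfolding pA_def using nA by (auto simp: M_def divide_le_eq_1)
      have pB01: "0 \<le> pB" "pB \<le> 1" unfolding pB_def using nA by (auto simp: M_def divide_le_eq_1)
      have "\<nu> (insert k A) * \<nu> B \<le> \<nu> (insert k B) * \<nu> A"
      proof -
        have "insert k A \<union> B = insert k B" "insert k A \<inter> B = A" using AB kB by auto
        then show ?thesis using lsm[OF sub(2)[OF AI] sub(1)[OF AB(2)]] by simp
      qed
      then have pAB: "pA \<le> pB" unfolding pA_def pB_def M_def using nA
        by (intro ratio_mono) (auto simp: algebra_simps)
      have phiA: "\<phi> A = (1 - pA) * f A + pA * f (insert k A)"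
        unfolding \<phi>_def pA_def M_def by (rule conv_form) (use nA in simp)
      have phiB: "\<phi> B = (1 - pB) * f B + pB * f (insert k B)"
        unfolding \<phi>_def pB_def M_def by (rule conv_form) (use nA in simp)
      have psiA: "\<psi> A = (1 - pA) * g A + pA * g (insert k A)"
        unfolding \<psi>_def pA_def M_def by (rule conv_form) (use nA in simp)
      have psiB: "\<psi> B = (1 - pB) * g B + pB * g (insert k B)"
        unfolding \<psi>_def pB_def M_def by (rule conv_form) (use nA in simp)
      have ins: "insert k A \<subseteq> insert k B" "insert k B \<subseteq> insert k I" "B \<subseteq> insert k I" "B \<subseteq> insert k B"
        using AB by auto
      have gen: "(1 - pA) * h A + pA * h (insert k A) \<le> (1 - pB) * h B + pB * h (insert k B)"
        if mh: "\<And>A B. A \<subseteq> B \<Longrightarrow> B \<subseteq> insert k I \<Longrightarrow> h A \<le> h B" for h :: "'a set \<Rightarrow> real"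
      proof -
        have h1: "h A \<le> h B" using mh AB ins by blast
        have h2: "h (insert k A) \<le> h (insert k B)" using mh ins by blast
        have h3: "h B \<le> h (insert k B)" using mh ins by blast
        have "(1 - pA) * h A + pA * h (insert k A) \<le> (1 - pA) * h B + pA * h (insert k B)"
          using h1 h2 pA01 by (intro add_mono mult_left_mono) auto
        also have "\<dots> = h B + pA * (h (insert k B) - h B)" by (simp add: algebra_simps)
        also have "\<dots> \<le> h B + pB * (h (insert k B) - h B)"
          using pAB h3 by (intro add_left_mono mult_right_mono) auto
        also have "\<dots> = (1 - pB) * h B + pB * h (insert k B)" by (simp add: algebra_simps)
        finally show ?thesis .
      qed
      show "\<phi> A \<le> \<phi> B" using gen[OF mf] phiA phiB by simp
      show "\<psi> A \<le> \<psi> B" using gen[OF mg] psiA psiB by simp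
    qed
  qed
  have "(\<Sum>A\<in>Pow (insert k I). \<nu> A) * (\<Sum>A\<in>Pow (insert k I). \<nu> A * f A * g A)
           - (\<Sum>A\<in>Pow (insert k I). \<nu> A * f A) * (\<Sum>A\<in>Pow (insert k I). \<nu> A * g A)
      = ((\<Sum>Z\<in>Pow I. M Z) * (\<Sum>Z\<in>Pow I. M Z * \<phi> Z * \<psi> Z) - (\<Sum>Z\<in>Pow I. M Z * \<phi> Z) * (\<Sum>Z\<in>Pow I. M Z * \<psi> Z))
        + (\<Sum>Z\<in>Pow I. M Z) * (\<Sum>Z\<in>Pow I. C Z)"
    unfolding e0 e1 e2 e3 by (rule lin_rearr)
  then show ?thesis using fkg unfolding e0 C_def by linarith
qed




definition Ecosh :: "real \<Rightarrow> real" where "Ecosh t = exp t + exp (- t)"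

lemma Ecosh_pos: "0 < Ecosh t" unfolding Ecosh_def by (simp add: add_pos_pos)

lemma Ecosh_prod: "Ecosh x * Ecosh y = exp (x + y) + exp (x - y) + exp (y - x) + exp (- x - y)"
  unfolding Ecosh_def by (simp add: algebra_simps exp_add exp_diff exp_minus divide_inverse)

lemma Ecosh_supermod:
  assumes "0 \<le> a" "0 \<le> b"
  shows "Ecosh (p + a) * Ecosh (p + b) \<le> Ecosh (p + a + b) * Ecosh p"
proof -
  have "0 \<le> (exp a - exp (-a)) * (exp b - exp (-b))" using assms by (intro mult_nonneg_nonneg) auto
  also have "\<dots> = exp (a + b) + exp (- a - b) - exp (a - b) - exp (b - a)"
    by (simp add: algebra_simps exp_add exp_diff exp_minus divide_inverse)
  finally have *: "exp (a - b) + exp (b - a) \<le> exp (a + b) + exp (- a - b)" by simp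
  have "Ecosh (p + a) * Ecosh (p + b) = exp (2*p + a + b) + exp (a - b) + exp (b - a) + exp (- 2*p - a - b)"
    unfolding Ecosh_prod by (simp add: algebra_simps)
  also have "\<dots> \<le> exp (2*p + a + b) + exp (a + b) + exp (- a - b) + exp (- 2*p - a - b)" using * by simp
  also have "\<dots> = Ecosh (p + a + b) * Ecosh p"
    unfolding Ecosh_prod by (simp add: algebra_simps)
  finally show ?thesis .
qed

lemma Ecosh_shift: "Ecosh (t + d) \<le> exp \<bar>d\<bar> * Ecosh t"
proof -
  have "exp (t + d) \<le> exp \<bar>d\<bar> * exp t" by (simp add: exp_add[symmetric] add.commute)
  moreover have "exp (- (t + d)) \<le> exp \<bar>d\<bar> * exp (- t)" by (simp add: exp_add[symmetric])
  ultimately show ?thesis unfolding Ecosh_def by (simp add: algebra_simps)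
qed

lemma sinh_ge_self: fixes d :: real assumes "0 \<le> d" shows "d \<le> sinh d"
proof -
  have "(\<lambda>x. sinh x - x) 0 \<le> (\<lambda>x. sinh x - x) d"
  proof (rule DERIV_nonneg_imp_nondecreasing[OF assms])
    fix x :: real
    show "\<exists>y. ((\<lambda>x. sinh x - x) has_real_derivative y) (at x) \<and> 0 \<le> y"
      by (rule exI[of _ "cosh x - 1"]) (auto intro!: derivative_eq_intros simp: cosh_real_ge_1)
  qed
  then show ?thesis by simp
qed

lemma cosh_le_exp_abs: "cosh (t::real) \<le> exp \<bar>t\<bar>"
  unfolding cosh_def by (cases "t \<ge> 0") (auto simp: scaleR_conv_of_real)

lemma tanh_diff_bound:
  fixes s t lam :: real
  assumes "s \<le> t" "\<bar>s\<bar> \<le> lam" "\<bar>t\<bar> \<le> lam"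
  shows "(t - s) * exp (- 2 * lam) \<le> tanh t - tanh s"
proof -
  have "tanh t - tanh s = sinh (t - s) / (cosh t * cosh s)"
    unfolding tanh_def sinh_diff by (simp add: field_simps)
  moreover have "(t - s) * exp (- 2 * lam) \<le> sinh (t - s) / (cosh t * cosh s)"
  proof -
    have "cosh t * cosh s \<le> exp \<bar>t\<bar> * exp \<bar>s\<bar>"
      by (intro mult_mono cosh_le_exp_abs) auto
    also have "\<dots> \<le> exp lam * exp lam" using assms by (intro mult_mono) auto
    finally have c: "cosh t * cosh s \<le> exp (2 * lam)" by (simp add: exp_add[symmetric])
    have "(t - s) * exp (- 2 * lam) = (t - s) / exp (2 * lam)" by (simp add: exp_minus field_simps)
    also have "\<dots> \<le> (t - s) / (cosh t * cosh s)"
      using c assms(1) by (intro divide_left_mono) auto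
    also have "\<dots> \<le> sinh (t - s) / (cosh t * cosh s)"
      using sinh_ge_self[of "t - s"] assms(1) by (intro divide_right_mono) auto
    finally show ?thesis .
  qed
  ultimately show ?thesis by simp
qed




definition eps :: "nat set \<Rightarrow> nat \<Rightarrow> real" where "eps Y j = (if j \<in> Y then 1 else -1)"
definition Lf :: "nat \<Rightarrow> (nat \<Rightarrow> real) \<Rightarrow> nat set \<Rightarrow> real" where
  "Lf m w Y = (\<Sum>j<m. w j * eps Y j)"

lemma Lf_modular: "Lf m w (A \<union> B) + Lf m w (A \<inter> B) = Lf m w A + Lf m w B"
  unfolding Lf_def sum.distrib[symmetric] by (intro sum.cong) (auto simp: eps_def algebra_simps)

lemma Lf_mono: assumes "\<And>j. j < m \<Longrightarrow> 0 \<le> w j" "A \<subseteq> B" shows "Lf m w A \<le> Lf m w B"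
  unfolding Lf_def using assms by (intro sum_mono) (auto simp: eps_def)

lemma Lf_insert: assumes "k < m" "k \<notin> Z" shows "Lf m w (insert k Z) = Lf m w Z + 2 * w k"
proof -
  have "Lf m w (insert k Z) - Lf m w Z = (\<Sum>j<m. if j = k then 2 * w k else 0)"
    unfolding Lf_def sum_subtractf[symmetric] using assms(2) by (intro sum.cong) (auto simp: eps_def)
  also have "\<dots> = 2 * w k" using assms(1) by simp
  finally show ?thesis by simp
qed

lemma Lf_abs: "\<bar>Lf m w Y\<bar> \<le> (\<Sum>j<m. \<bar>w j\<bar>)"
  unfolding Lf_def by (rule order_trans[OF sum_abs]) (auto intro!: sum_mono simp: eps_def abs_mult)

definition lsm :: "'a set \<Rightarrow> ('a set \<Rightarrow> real) \<Rightarrow> bool" where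
  "lsm T F \<longleftrightarrow> (\<forall>A B. A \<subseteq> T \<longrightarrow> B \<subseteq> T \<longrightarrow> F A * F B \<le> F (A \<union> B) * F (A \<inter> B))"

lemma lsm_mult:
  assumes "lsm T F" "lsm T G" "\<And>A. A \<subseteq> T \<Longrightarrow> 0 \<le> F A" "\<And>A. A \<subseteq> T \<Longrightarrow> 0 \<le> G A"
  shows "lsm T (\<lambda>A. F A * G A)"
  unfolding lsm_def
proof (intro allI impI)
  fix A B assume AB: "A \<subseteq> T" "B \<subseteq> T"
  have "F A * G A * (F B * G B) = (F A * F B) * (G A * G B)" by (simp add: algebra_simps)
  also have "\<dots> \<le> (F (A \<union> B) * F (A \<inter> B)) * (G (A \<union> B) * G (A \<inter> B))"
  proof (rule mult_mono)
    show "F A * F B \<le> F (A \<union> B) * F (A \<inter> B)" using assms(1) AB unfolding lsm_def by blast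
    show "G A * G B \<le> G (A \<union> B) * G (A \<inter> B)" using assms(2) AB unfolding lsm_def by blast
    have "A \<union> B \<subseteq> T" "A \<inter> B \<subseteq> T" using AB by auto
    then show "0 \<le> F (A \<union> B) * F (A \<inter> B)" using assms(3) by simp
    show "0 \<le> G A * G B" using assms(4) AB by simp
  qed
  also have "\<dots> = F (A \<union> B) * G (A \<union> B) * (F (A \<inter> B) * G (A \<inter> B))" by (simp add: algebra_simps)
  finally show "F A * G A * (F B * G B) \<le> F (A \<union> B) * G (A \<union> B) * (F (A \<inter> B) * G (A \<inter> B))" .
qed

lemma lsm_prod:
  assumes "finite K" "\<And>i. i \<in> K \<Longrightarrow> lsm T (F i)" "\<And>i A. i \<in> K \<Longrightarrow> A \<subseteq> T \<Longrightarrow> 0 \<le> F i A"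
  shows "lsm T (\<lambda>A. \<Prod>i\<in>K. F i A)"
  using assms
proof (induction K rule: finite_induct)
  case empty then show ?case by (simp add: lsm_def)
next
  case (insert a K)
  have "lsm T (\<lambda>A. F a A * (\<Prod>i\<in>K. F i A))"
  proof (rule lsm_mult)
    show "lsm T (F a)" using insert.prems(1) by simp
    show "lsm T (\<lambda>A. \<Prod>i\<in>K. F i A)" using insert.IH insert.prems by simp
    show "0 \<le> F a A" if "A \<subseteq> T" for A using insert.prems(2) that by simp
    show "0 \<le> (\<Prod>i\<in>K. F i A)" if "A \<subseteq> T" for A using insert.prems(2) that by (simp add: prod_nonneg)
  qed
  then show ?case using insert.hyps by simp
qed

lemma lsm_exp_lin: "lsm T (\<lambda>Y. exp (a + Lf m w Y))"
  unfolding lsm_def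
proof (intro allI impI)
  fix A B :: "nat set"
  have "exp (a + Lf m w A) * exp (a + Lf m w B) = exp (a + Lf m w (A \<union> B)) * exp (a + Lf m w (A \<inter> B))"
    unfolding exp_add[symmetric] using Lf_modular[of m w A B] by (simp add: algebra_simps)
  then show "exp (a + Lf m w A) * exp (a + Lf m w B) \<le> exp (a + Lf m w (A \<union> B)) * exp (a + Lf m w (A \<inter> B))"
    by simp
qed

lemma Ecosh_supermod': "0 \<le> a \<Longrightarrow> 0 \<le> b \<Longrightarrow> q1 = p + a \<Longrightarrow> q2 = p + b \<Longrightarrow> q3 = p + a + b
   \<Longrightarrow> Ecosh q1 * Ecosh q2 \<le> Ecosh q3 * Ecosh p"
  using Ecosh_supermod by simp

lemma lsm_Ecosh: assumes "\<And>j. j < m \<Longrightarrow> 0 \<le> w j" shows "lsm T (\<lambda>Y. Ecosh (a + Lf m w Y))"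
  unfolding lsm_def
proof (intro allI impI)
  fix A B :: "nat set"
  define p where "p = a + Lf m w (A \<inter> B)"
  define x where "x = Lf m w A - Lf m w (A \<inter> B)"
  define y where "y = Lf m w B - Lf m w (A \<inter> B)"
  have "0 \<le> x" "0 \<le> y" unfolding x_def y_def using Lf_mono[OF assms] by auto
  then show "Ecosh (a + Lf m w A) * Ecosh (a + Lf m w B) \<le> Ecosh (a + Lf m w (A \<union> B)) * Ecosh (a + Lf m w (A \<inter> B))"
    by (rule Ecosh_supermod') (unfold p_def x_def y_def, use Lf_modular[of m w A B] in \<open>simp_all add: algebra_simps\<close>)
qed

definition enc :: "(nat \<Rightarrow> real) \<Rightarrow> nat \<Rightarrow> nat set \<Rightarrow> nat \<Rightarrow> real" where
  "enc \<sigma> m Y = (\<lambda>j. if j < m then \<sigma> j * eps Y j else 0)"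

lemma enc_bij:
  assumes "\<And>j. \<sigma> j = 1 \<or> \<sigma> j = -1"
  shows "bij_betw (enc \<sigma> m) (Pow {..<m}) (spins m)"
proof -
  have sq: "\<sigma> j * \<sigma> j = 1" for j using assms[of j] by auto
  have se: "\<sigma> j * enc \<sigma> m a j = (if j < m then eps a j else 0)" for a j
    unfolding enc_def using sq[of j] by (simp add: mult.assoc[symmetric])
  show ?thesis
  proof (rule bij_betw_byWitness[where f' = "\<lambda>y. {j. j < m \<and> \<sigma> j * y j = 1}"])
    show "\<forall>a\<in>Pow {..<m}. {j. j < m \<and> \<sigma> j * enc \<sigma> m a j = 1} = a"
      unfolding se by (auto simp: eps_def)
    show "\<forall>a'\<in>spins m. enc \<sigma> m {j. j < m \<and> \<sigma> j * a' j = 1} = a'"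
    proof
      fix y assume y: "y \<in> spins m"
      show "enc \<sigma> m {j. j < m \<and> \<sigma> j * y j = 1} = y"
      proof
        fix j
        have yv: "j < m \<Longrightarrow> y j = 1 \<or> y j = -1" "m \<le> j \<Longrightarrow> y j = 0" using y unfolding spins_def by auto
        consider "j \<ge> m" | "j < m" "y j = 1" | "j < m" "y j = -1" using yv(1) by linarith
        then show "enc \<sigma> m {j. j < m \<and> \<sigma> j * y j = 1} j = y j"
        proof cases
          case 1 then show ?thesis using yv(2) unfolding enc_def by auto
        next
          case 2 then show ?thesis using assms[of j] unfolding enc_def eps_def by auto
        next
          case 3 then show ?thesis using assms[of j] unfolding enc_def eps_def by auto
        qed
      qed
    qed
    show "enc \<sigma> m ` Pow {..<m} \<subseteq> spins m"
    proof
      fix z assume "z \<in> enc \<sigma> m ` Pow {..<m}"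
      then obtain a where "z = enc \<sigma> m a" by blast
      then show "z \<in> spins m" unfolding spins_def enc_def eps_def using assms by auto
    qed
    show "(\<lambda>y. {j. j < m \<and> \<sigma> j * y j = 1}) ` spins m \<subseteq> Pow {..<m}" by auto
  qed
qed

lemma finite_spins: "finite (spins n)"
proof -
  have "bij_betw (enc (\<lambda>_. 1) n) (Pow {..<n}) (spins n)" by (rule enc_bij) simp
  then show ?thesis using bij_betw_finite by blast
qed

lemma spins_nonempty: "(\<lambda>i. if i < n then 1 else 0) \<in> spins n"
  unfolding spins_def by auto

lemma spins_factor:
  fixes w :: "nat \<Rightarrow> real \<Rightarrow> real"
  assumes S: "S \<subseteq> {..<n}" and s: "\<And>i. i \<in> S \<Longrightarrow> s i = 1 \<or> s i = -1"
  shows "(\<Sum>x\<in>{x\<in>spins n. \<forall>i\<in>S. x i = s i}. \<Prod>i<n. w i (x i))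
       = (\<Prod>i<n. if i \<in> S then w i (s i) else w i 1 + w i (-1))"
proof -
  define B where "B i = (if i \<in> S then {s i} else {1, -1::real})" for i
  have "(\<Prod>i<n. if i \<in> S then w i (s i) else w i 1 + w i (-1)) = (\<Prod>i<n. \<Sum>t\<in>B i. w i t)"
    by (intro prod.cong) (auto simp: B_def)
  also have "\<dots> = (\<Sum>p\<in>PiE {..<n} B. \<Prod>i<n. w i (p i))"
    by (rule prod_sum_PiE) (auto simp: B_def)
  also have "\<dots> = (\<Sum>x\<in>{x\<in>spins n. \<forall>i\<in>S. x i = s i}. \<Prod>i<n. w i (x i))"
  proof (rule sum.reindex_bij_witness[where i = "\<lambda>x. restrict x {..<n}" and j = "\<lambda>p i. if i < n then p i else 0"])
    fix p assume p: "p \<in> PiE {..<n} B"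
    show "restrict (\<lambda>i. if i < n then p i else 0) {..<n} = p"
      using p by (auto simp: PiE_def extensional_def restrict_def)
    show "(\<lambda>i. if i < n then p i else 0) \<in> {x \<in> spins n. \<forall>i\<in>S. x i = s i}"
      using p S s unfolding spins_def B_def PiE_def Pi_def by (auto split: if_splits) (metis insertE singletonD)
    show "(\<Prod>i<n. w i (if i < n then p i else 0)) = (\<Prod>i<n. w i (p i))"
      by (intro prod.cong) auto
  next
    fix x assume x: "x \<in> {x \<in> spins n. \<forall>i\<in>S. x i = s i}"
    show "(\<lambda>i. if i < n then restrict x {..<n} i else 0) = x"
      using x unfolding spins_def by (auto simp: restrict_def)
    show "restrict x {..<n} \<in> PiE {..<n} B"
      using x unfolding spins_def B_def by auto
  qed
  finally show ?thesis ..
qed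




lemma Z_pos: "0 < rbm_Z n m J h g"
proof -
  have ne: "spins k \<noteq> {}" for k using spins_nonempty[of k] by blast
  show ?thesis unfolding rbm_Z_def
    by (intro sum_pos finite_spins ne) (simp_all add: rbm_weight_def)
qed


lemma C_bound:
  fixes a b r d1 d2 \<delta> :: real
  assumes "0 < a" "0 < b" "a \<le> r * b" "b \<le> r * a" "0 \<le> \<delta>" "\<delta> \<le> d1" "\<delta> \<le> d2"
  shows "(a + b) * (\<delta> * \<delta> / (4 * r)) \<le> a * b / (a + b) * d1 * d2"
proof -
  have rpos: "0 < r"
  proof (rule ccontr)
    assume "\<not> 0 < r" then have "r * b \<le> 0" using assms(2) by (simp add: mult_nonpos_nonneg)
    then show False using assms(1,3) by linarith
  qed
  have sq: "(a + b) * (a + b) \<le> 4 * r * (a * b)"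
  proof (cases "a \<le> b")
    case True
    have "(a + b) * (a + b) \<le> (2 * b) * (2 * b)" using True assms by (intro mult_mono) auto
    also have "\<dots> = 4 * b * b" by simp
    also have "\<dots> \<le> 4 * b * (r * a)" using assms by (intro mult_left_mono) auto
    finally show ?thesis by (simp add: mult_ac)
  next
    case False
    have "(a + b) * (a + b) \<le> (2 * a) * (2 * a)" using False assms by (intro mult_mono) auto
    also have "\<dots> = 4 * a * a" by simp
    also have "\<dots> \<le> 4 * a * (r * b)" using assms by (intro mult_left_mono) auto
    finally show ?thesis by (simp add: mult_ac)
  qed
  have ab: "(a + b) / (4 * r) \<le> a * b / (a + b)"
    using sq rpos assms(1,2) by (simp add: divide_simps mult_ac)
  have dd: "\<delta> * \<delta> \<le> d1 * d2" using assms by (intro mult_mono) auto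
  have "(a + b) * (\<delta> * \<delta> / (4 * r)) = ((a + b) / (4 * r)) * (\<delta> * \<delta>)" by simp
  also have "\<dots> \<le> (a * b / (a + b)) * (d1 * d2)"
    using ab dd assms rpos by (intro mult_mono) auto
  finally show ?thesis by (simp add: mult.assoc)
qed

lemma exp_shift: fixes t d :: real
  shows "exp (t + d) \<le> exp \<bar>d\<bar> * exp t" "exp t \<le> exp \<bar>d\<bar> * exp (t + d)"
  by (simp_all add: exp_add[symmetric] add.commute)

lemma Ecosh_shift2: "Ecosh t \<le> exp \<bar>d\<bar> * Ecosh (t + d)"
  using Ecosh_shift[of "t + d" "- d"] by simp

lemma ratio_prod:
  fixes a b c :: "nat \<Rightarrow> real"
  assumes "finite K" "\<And>i. i \<in> K \<Longrightarrow> 0 \<le> a i" "\<And>i. i \<in> K \<Longrightarrow> a i \<le> c i * b i"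
  shows "(\<Prod>i\<in>K. a i) \<le> (\<Prod>i\<in>K. c i) * (\<Prod>i\<in>K. b i)"
  unfolding prod.distrib[symmetric] using assms by (intro prod_mono) auto

locale rbmc =
  fixes n m :: nat and J :: "nat \<Rightarrow> nat \<Rightarrow> real" and h g :: "nat \<Rightarrow> real"
    and alpha lam :: real and u v k :: nat and S :: "nat set" and s :: "nat \<Rightarrow> real"
  assumes LC: "locally_consistent n m J h g alpha lam"
    and apos: "alpha > 0"
    and un: "u < n" and vn: "v < n" and uv: "u \<noteq> v"
    and km: "k < m" and Juk: "J u k \<noteq> 0" and Jvk: "J v k \<noteq> 0"
    and Ssub: "S \<subseteq> {..<n} - {u, v}"
    and sS: "s \<in> spins n"
begin

definition \<sigma> :: "nat \<Rightarrow> real" where "\<sigma> j = (if \<forall>i<n. 0 \<le> J i j then 1 else -1)"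
definition cc :: "nat \<Rightarrow> (nat \<Rightarrow> real) \<Rightarrow> real" where "cc i y = h i + (\<Sum>j<m. J i j * y j)"
definition \<Phi> :: "nat \<Rightarrow> (nat \<Rightarrow> real) \<Rightarrow> real" where
  "\<Phi> i y = (if i \<in> S then exp (s i * cc i y) else Ecosh (cc i y))"
definition AA :: "(nat \<Rightarrow> real) set" where "AA = {x\<in>spins n. \<forall>i\<in>S. x i = s i}"
definition Q :: "nat set \<Rightarrow> real" where
  "Q U = (\<Sum>y\<in>spins m. exp (\<Sum>j<m. g j * y j) * (\<Prod>i<n. \<Phi> i y) * (\<Prod>i\<in>U. tanh (cc i y)))"

lemma sigma_pm: "\<sigma> j = 1 \<or> \<sigma> j = -1" unfolding \<sigma>_def by auto

lemma J_sigma: assumes "i < n" "j < m" shows "J i j * \<sigma> j = \<bar>J i j\<bar>"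
proof (cases "\<forall>i<n. 0 \<le> J i j")
  case True then show ?thesis using assms by (simp add: \<sigma>_def)
next
  case False
  then have "\<forall>i<n. J i j \<le> 0" using LC assms(2) unfolding locally_consistent_def by blast
  moreover have "\<sigma> j = -1" using False by (simp add: \<sigma>_def)
  ultimately show ?thesis using assms by simp
qed

lemma W_split: "rbm_weight n m J h g x y = exp (\<Sum>i<n. x i * cc i y) * exp (\<Sum>j<m. g j * y j)"
proof -
  have "(\<Sum>i<n. \<Sum>j<m. x i * J i j * y j) + (\<Sum>i<n. h i * x i) = (\<Sum>i<n. x i * cc i y)"
    unfolding cc_def sum.distrib[symmetric]
    by (intro sum.cong refl) (simp add: distrib_left sum_distrib_left mult_ac)
  then show ?thesis unfolding rbm_weight_def exp_add[symmetric] by simp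
qed

lemma s_pm: "i \<in> S \<Longrightarrow> s i = 1 \<or> s i = -1" using sS Ssub unfolding spins_def by auto

lemma inner_sum:
  assumes U: "U \<subseteq> {..<n}" "U \<inter> S = {}"
  shows "(\<Sum>x\<in>AA. rbm_weight n m J h g x y * (\<Prod>i\<in>U. x i))
       = exp (\<Sum>j<m. g j * y j) * (\<Prod>i<n. \<Phi> i y) * (\<Prod>i\<in>U. tanh (cc i y))"
proof -
  define wf where "wf i t = exp (t * cc i y) * (if i \<in> U then t else 1)" for i t
  have SU: "{i \<in> {..<n}. i \<in> U} = U" using U by auto
  have pU: "(\<Prod>i\<in>U. x i) = (\<Prod>i<n. if i \<in> U then x i else 1)" for x :: "nat \<Rightarrow> real"
    using prod.inter_filter[of "{..<n}" x "\<lambda>i. i \<in> U"] SU by simp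
  have pT: "(\<Prod>i\<in>U. tanh (cc i y)) = (\<Prod>i<n. if i \<in> U then tanh (cc i y) else 1)"
    using prod.inter_filter[of "{..<n}" "\<lambda>i. tanh (cc i y)" "\<lambda>i. i \<in> U"] SU by simp
  have "(\<Sum>x\<in>AA. rbm_weight n m J h g x y * (\<Prod>i\<in>U. x i))
      = (\<Sum>x\<in>AA. exp (\<Sum>j<m. g j * y j) * (\<Prod>i<n. wf i (x i)))"
  proof (intro sum.cong refl)
    fix x
    show "rbm_weight n m J h g x y * (\<Prod>i\<in>U. x i) = exp (\<Sum>j<m. g j * y j) * (\<Prod>i<n. wf i (x i))"
      unfolding W_split exp_sum[OF finite_lessThan] pU wf_def prod.distrib by (simp add: mult_ac)
  qed
  also have "\<dots> = exp (\<Sum>j<m. g j * y j) * (\<Sum>x\<in>AA. \<Prod>i<n. wf i (x i))"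
    by (simp add: sum_distrib_left)
  also have "(\<Sum>x\<in>AA. \<Prod>i<n. wf i (x i)) = (\<Prod>i<n. if i \<in> S then wf i (s i) else wf i 1 + wf i (-1))"
    unfolding AA_def by (rule spins_factor) (use Ssub s_pm in auto)
  also have "\<dots> = (\<Prod>i<n. \<Phi> i y * (if i \<in> U then tanh (cc i y) else 1))"
  proof (intro prod.cong refl)
    fix i
    show "(if i \<in> S then wf i (s i) else wf i 1 + wf i (-1)) = \<Phi> i y * (if i \<in> U then tanh (cc i y) else 1)"
    proof (cases "i \<in> S")
      case True then have "i \<notin> U" using U by auto
      then show ?thesis using True by (simp add: wf_def \<Phi>_def)
    next
      case False
      have E: "Ecosh (cc i y) \<noteq> 0" using Ecosh_pos[of "cc i y"] by simp
      show ?thesis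
      proof (cases "i \<in> U")
        case True
        have "Ecosh (cc i y) * tanh (cc i y) = exp (cc i y) - exp (- cc i y)"
          unfolding tanh_altdef Ecosh_def using E[unfolded Ecosh_def] by simp
        then show ?thesis using True False by (simp add: wf_def \<Phi>_def)
      next
        case nU: False
        then show ?thesis using False by (simp add: wf_def \<Phi>_def Ecosh_def)
      qed
    qed
  qed
  also have "\<dots> = (\<Prod>i<n. \<Phi> i y) * (\<Prod>i\<in>U. tanh (cc i y))"
    unfolding prod.distrib pT ..
  finally show ?thesis by (simp add: mult.assoc)
qed

lemma sum_pX:
  assumes "U \<subseteq> {..<n}" "U \<inter> S = {}"
  shows "(\<Sum>x\<in>AA. rbm_pX n m J h g x * (\<Prod>i\<in>U. x i)) = Q U / rbm_Z n m J h g"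
proof -
  have "(\<Sum>x\<in>AA. rbm_pX n m J h g x * (\<Prod>i\<in>U. x i))
      = (\<Sum>x\<in>AA. \<Sum>y\<in>spins m. rbm_weight n m J h g x y * (\<Prod>i\<in>U. x i)) / rbm_Z n m J h g"
    unfolding rbm_pX_def sum_divide_distrib by (intro sum.cong refl) (simp add: sum_distrib_right)
  also have "(\<Sum>x\<in>AA. \<Sum>y\<in>spins m. rbm_weight n m J h g x y * (\<Prod>i\<in>U. x i))
      = (\<Sum>y\<in>spins m. \<Sum>x\<in>AA. rbm_weight n m J h g x y * (\<Prod>i\<in>U. x i))"
    by (rule sum.swap)
  also have "\<dots> = Q U" unfolding Q_def inner_sum[OF assms] ..
  finally show ?thesis .
qed

lemma condE_eq:
  assumes "U \<subseteq> {..<n}" "U \<inter> S = {}" "\<And>x. F x = (\<Prod>i\<in>U. x i)"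
  shows "rbm_condE n m J h g S s F = Q U / Q {}"
proof -
  have Z: "rbm_Z n m J h g \<noteq> 0" using Z_pos[of n m J h g] by simp
  have "rbm_condE n m J h g S s F = (Q U / rbm_Z n m J h g) / (Q {} / rbm_Z n m J h g)"
    unfolding rbm_condE_def Let_def AA_def[symmetric] assms(3) sum_pX[OF assms(1,2), symmetric]
      sum_pX[of "{}", simplified, symmetric] ..
  also have "\<dots> = Q U / Q {}" using Z by simp
  finally show ?thesis .
qed

lemma condCov_eq:
  "rbm_condCov n m J h g u v S s = Q {u, v} / Q {} - (Q {u} / Q {}) * (Q {v} / Q {})"
proof -
  have d: "{u, v} \<inter> S = {}" "{u} \<inter> S = {}" "{v} \<inter> S = {}" using Ssub by auto
  have sub: "{u, v} \<subseteq> {..<n}" "{u} \<subseteq> {..<n}" "{v} \<subseteq> {..<n}" using un vn by auto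
  show ?thesis unfolding rbm_condCov_def
    by (subst condE_eq[OF sub(1) d(1)], simp add: uv)
       (subst condE_eq[OF sub(2) d(2)], simp, subst condE_eq[OF sub(3) d(3)], simp_all)
qed

definition gs :: "nat \<Rightarrow> real" where "gs j = g j * \<sigma> j"
definition Lu :: "nat \<Rightarrow> nat set \<Rightarrow> real" where "Lu i Y = h i + Lf m (\<lambda>j. \<bar>J i j\<bar>) Y"
definition \<Phi>' :: "nat \<Rightarrow> nat set \<Rightarrow> real" where
  "\<Phi>' i Y = (if i \<in> S then exp (s i * Lu i Y) else Ecosh (Lu i Y))"
definition \<nu> :: "nat set \<Rightarrow> real" where "\<nu> Y = exp (Lf m gs Y) * (\<Prod>i<n. \<Phi>' i Y)"

lemma cc_enc: assumes "i < n" shows "cc i (enc \<sigma> m Y) = Lu i Y"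
  unfolding cc_def Lu_def Lf_def enc_def
  by (simp, intro sum.cong refl) (simp add: J_sigma[OF assms] mult.assoc[symmetric])

lemma g_enc: "(\<Sum>j<m. g j * enc \<sigma> m Y j) = Lf m gs Y"
  unfolding Lf_def enc_def gs_def by (intro sum.cong refl) (simp add: mult.assoc)

lemma Q_reindex:
  assumes "U \<subseteq> {..<n}"
  shows "Q U = (\<Sum>Y\<in>Pow {..<m}. \<nu> Y * (\<Prod>i\<in>U. tanh (Lu i Y)))"
proof -
  have "Q U = (\<Sum>Y\<in>Pow {..<m}. exp (\<Sum>j<m. g j * enc \<sigma> m Y j) * (\<Prod>i<n. \<Phi> i (enc \<sigma> m Y))
        * (\<Prod>i\<in>U. tanh (cc i (enc \<sigma> m Y))))"
    unfolding Q_def by (rule sum.reindex_bij_betw[OF enc_bij[OF sigma_pm], symmetric])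
  also have "\<dots> = (\<Sum>Y\<in>Pow {..<m}. \<nu> Y * (\<Prod>i\<in>U. tanh (Lu i Y)))"
  proof (intro sum.cong refl)
    fix Y
    have "(\<Prod>i<n. \<Phi> i (enc \<sigma> m Y)) = (\<Prod>i<n. \<Phi>' i Y)"
      by (intro prod.cong refl) (simp add: \<Phi>_def \<Phi>'_def cc_enc)
    moreover have "(\<Prod>i\<in>U. tanh (cc i (enc \<sigma> m Y))) = (\<Prod>i\<in>U. tanh (Lu i Y))"
      using assms by (intro prod.cong refl) (auto simp: cc_enc)
    ultimately show "exp (\<Sum>j<m. g j * enc \<sigma> m Y j) * (\<Prod>i<n. \<Phi> i (enc \<sigma> m Y))
        * (\<Prod>i\<in>U. tanh (cc i (enc \<sigma> m Y))) = \<nu> Y * (\<Prod>i\<in>U. tanh (Lu i Y))"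
      by (simp add: \<nu>_def g_enc)
  qed
  finally show ?thesis .
qed

lemma Phi'_pos: "0 < \<Phi>' i Y" unfolding \<Phi>'_def using Ecosh_pos by auto

lemma nu_pos: "0 < \<nu> Y" unfolding \<nu>_def using Phi'_pos by (simp add: prod_pos)

lemma nu_lsm: "lsm {..<m} \<nu>"
proof -
  have "lsm {..<m} (\<lambda>Y. exp (0 + Lf m gs Y) * (\<Prod>i<n. \<Phi>' i Y))"
  proof (rule lsm_mult)
    show "lsm {..<m} (\<lambda>Y. exp (0 + Lf m gs Y))" by (rule lsm_exp_lin)
    show "lsm {..<m} (\<lambda>Y. \<Prod>i<n. \<Phi>' i Y)"
    proof (rule lsm_prod)
      fix i assume "i \<in> {..<n}"
      show "lsm {..<m} (\<Phi>' i)"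
      proof (cases "i \<in> S")
        case True
        have "\<Phi>' i = (\<lambda>Y. exp (s i * h i + Lf m (\<lambda>j. s i * \<bar>J i j\<bar>) Y))"
          using True unfolding \<Phi>'_def Lu_def Lf_def
          by (auto simp: distrib_left sum_distrib_left mult.assoc)
        then show ?thesis using lsm_exp_lin by simp
      next
        case False
        have "\<Phi>' i = (\<lambda>Y. Ecosh (h i + Lf m (\<lambda>j. \<bar>J i j\<bar>) Y))"
          using False unfolding \<Phi>'_def Lu_def by auto
        then show ?thesis using lsm_Ecosh[of m "\<lambda>j. \<bar>J i j\<bar>"] by simp
      qed
    qed (auto intro: less_imp_le Phi'_pos)
  qed (auto intro: less_imp_le Phi'_pos prod_nonneg)
  then show ?thesis unfolding \<nu>_def by simp
qed

lemma Lu_mono: "A \<subseteq> B \<Longrightarrow> Lu i A \<le> Lu i B"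
  unfolding Lu_def using Lf_mono[of m "\<lambda>j. \<bar>J i j\<bar>" A B] by simp

lemma Lu_insert: "k \<notin> Z \<Longrightarrow> Lu i (insert k Z) = Lu i Z + 2 * \<bar>J i k\<bar>"
  unfolding Lu_def using Lf_insert[OF km] by simp

lemma Lu_bound: assumes "i < n" shows "\<bar>Lu i Y\<bar> \<le> lam"
proof -
  have "\<bar>Lu i Y\<bar> \<le> \<bar>h i\<bar> + \<bar>Lf m (\<lambda>j. \<bar>J i j\<bar>) Y\<bar>" unfolding Lu_def by (rule abs_triangle_ineq)
  also have "\<dots> \<le> \<bar>h i\<bar> + (\<Sum>j<m. \<bar>J i j\<bar>)" using Lf_abs[of m "\<lambda>j. \<bar>J i j\<bar>" Y] by simp
  also have "\<dots> \<le> lam" using LC assms unfolding locally_consistent_def by auto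
  finally show ?thesis .
qed

lemma Phi'_ratio:
  assumes "k \<notin> Z"
  shows "\<Phi>' i (insert k Z) \<le> exp (2 * \<bar>J i k\<bar>) * \<Phi>' i Z"
    "\<Phi>' i Z \<le> exp (2 * \<bar>J i k\<bar>) * \<Phi>' i (insert k Z)"
proof -
  have L: "Lu i (insert k Z) = Lu i Z + 2 * \<bar>J i k\<bar>" using Lu_insert[OF assms] .
  show "\<Phi>' i (insert k Z) \<le> exp (2 * \<bar>J i k\<bar>) * \<Phi>' i Z"
  proof (cases "i \<in> S")
    case True
    have sa: "\<bar>s i * (2 * \<bar>J i k\<bar>)\<bar> = 2 * \<bar>J i k\<bar>" using s_pm[OF True] by auto
    show ?thesis using True exp_shift(1)[of "s i * Lu i Z" "s i * (2 * \<bar>J i k\<bar>)"] sa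
      unfolding \<Phi>'_def L by (simp add: distrib_left)
  next
    case False
    show ?thesis using False Ecosh_shift[of "Lu i Z" "2 * \<bar>J i k\<bar>"] unfolding \<Phi>'_def L by simp
  qed
  show "\<Phi>' i Z \<le> exp (2 * \<bar>J i k\<bar>) * \<Phi>' i (insert k Z)"
  proof (cases "i \<in> S")
    case True
    have sa: "\<bar>s i * (2 * \<bar>J i k\<bar>)\<bar> = 2 * \<bar>J i k\<bar>" using s_pm[OF True] by auto
    show ?thesis using True exp_shift(2)[of "s i * Lu i Z" "s i * (2 * \<bar>J i k\<bar>)"] sa
      unfolding \<Phi>'_def L by (simp add: distrib_left)
  next
    case False
    show ?thesis using False Ecosh_shift2[of "Lu i Z" "2 * \<bar>J i k\<bar>"] unfolding \<Phi>'_def L by simp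
  qed
qed

lemma nu_ratio:
  assumes "k \<notin> Z"
  shows "\<nu> (insert k Z) \<le> exp (2 * lam) * \<nu> Z" "\<nu> Z \<le> exp (2 * lam) * \<nu> (insert k Z)"
proof -
  define D where "D = 2 * \<bar>g k\<bar> + (\<Sum>i<n. 2 * \<bar>J i k\<bar>)"
  have D: "D \<le> 2 * lam"
  proof -
    have "(\<Sum>i<n. \<bar>J i k\<bar>) + \<bar>g k\<bar> \<le> lam" using LC km unfolding locally_consistent_def by auto
    then show ?thesis unfolding D_def by (simp add: sum_distrib_left[symmetric])
  qed
  have gsk: "\<bar>2 * gs k\<bar> = 2 * \<bar>g k\<bar>" unfolding gs_def using sigma_pm[of k] by auto
  have Lg: "Lf m gs (insert k Z) = Lf m gs Z + 2 * gs k" using Lf_insert[OF km assms] .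
  have ep: "exp (\<Sum>i<n. 2 * \<bar>J i k\<bar>) = (\<Prod>i<n. exp (2 * \<bar>J i k\<bar>))" by (rule exp_sum) simp
  have P1: "(\<Prod>i<n. \<Phi>' i (insert k Z)) \<le> exp (\<Sum>i<n. 2 * \<bar>J i k\<bar>) * (\<Prod>i<n. \<Phi>' i Z)"
    unfolding ep by (rule ratio_prod) (auto intro: less_imp_le Phi'_pos Phi'_ratio(1)[OF assms])
  have P2: "(\<Prod>i<n. \<Phi>' i Z) \<le> exp (\<Sum>i<n. 2 * \<bar>J i k\<bar>) * (\<Prod>i<n. \<Phi>' i (insert k Z))"
    unfolding ep by (rule ratio_prod) (auto intro: less_imp_le Phi'_pos Phi'_ratio(2)[OF assms])
  have E1: "exp (Lf m gs (insert k Z)) \<le> exp (2 * \<bar>g k\<bar>) * exp (Lf m gs Z)"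
    using exp_shift(1)[of "Lf m gs Z" "2 * gs k"] unfolding Lg gsk .
  have E2: "exp (Lf m gs Z) \<le> exp (2 * \<bar>g k\<bar>) * exp (Lf m gs (insert k Z))"
    using exp_shift(2)[of "Lf m gs Z" "2 * gs k"] unfolding Lg gsk .
  have pp: "0 \<le> (\<Prod>i<n. \<Phi>' i Y)" for Y by (intro prod_nonneg) (auto intro: less_imp_le Phi'_pos)
  have "\<nu> (insert k Z) \<le> (exp (2 * \<bar>g k\<bar>) * exp (Lf m gs Z)) * (exp (\<Sum>i<n. 2 * \<bar>J i k\<bar>) * (\<Prod>i<n. \<Phi>' i Z))"
    unfolding \<nu>_def by (rule mult_mono[OF E1 P1]) (simp_all add: pp)
  also have "\<dots> = exp D * \<nu> Z" unfolding D_def \<nu>_def exp_add by (simp add: mult_ac)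
  also have "\<dots> \<le> exp (2 * lam) * \<nu> Z" using D nu_pos[of Z] by (intro mult_right_mono) auto
  finally show "\<nu> (insert k Z) \<le> exp (2 * lam) * \<nu> Z" .
  have "\<nu> Z \<le> (exp (2 * \<bar>g k\<bar>) * exp (Lf m gs (insert k Z))) * (exp (\<Sum>i<n. 2 * \<bar>J i k\<bar>) * (\<Prod>i<n. \<Phi>' i (insert k Z)))"
    unfolding \<nu>_def by (rule mult_mono[OF E2 P2]) (simp_all add: pp)
  also have "\<dots> = exp D * \<nu> (insert k Z)" unfolding D_def \<nu>_def exp_add by (simp add: mult_ac)
  also have "\<dots> \<le> exp (2 * lam) * \<nu> (insert k Z)" using D nu_pos[of "insert k Z"] by (intro mult_right_mono) auto
  finally show "\<nu> Z \<le> exp (2 * lam) * \<nu> (insert k Z)" .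
qed

lemma delta_bound:
  assumes "i < n" "J i k \<noteq> 0" "k \<notin> Z"
  shows "2 * alpha * exp (- 2 * lam) \<le> tanh (Lu i (insert k Z)) - tanh (Lu i Z)"
proof -
  have a: "alpha \<le> \<bar>J i k\<bar>" using LC assms(1,2) km unfolding locally_consistent_def by auto
  have "(Lu i (insert k Z) - Lu i Z) * exp (- 2 * lam) \<le> tanh (Lu i (insert k Z)) - tanh (Lu i Z)"
    by (rule tanh_diff_bound) (use Lu_insert[OF assms(3), of i] in simp, rule Lu_bound[OF assms(1)], rule Lu_bound[OF assms(1)])
  moreover have "2 * alpha * exp (- 2 * lam) \<le> (Lu i (insert k Z) - Lu i Z) * exp (- 2 * lam)"
    using a Lu_insert[OF assms(3), of i] by (intro mult_right_mono) auto
  ultimately show ?thesis by linarith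
qed

lemma condCov_bound: "alpha\<^sup>2 * exp (- 6 * lam) \<le> rbm_condCov n m J h g u v S s"
proof -
  define I where "I = {..<m} - {k}"
  have kI: "k \<notin> I" and finI: "finite I" and kI': "insert k I = {..<m}" unfolding I_def using km by auto
  define f where "f Y = tanh (Lu u Y)" for Y
  define gg where "gg Y = tanh (Lu v Y)" for Y
  define P where "P = Pow (insert k I)"
  define S0 where "S0 = (\<Sum>A\<in>P. \<nu> A)"
  define S1 where "S1 = (\<Sum>A\<in>P. \<nu> A * f A)"
  define S2 where "S2 = (\<Sum>A\<in>P. \<nu> A * gg A)"
  define S3 where "S3 = (\<Sum>A\<in>P. \<nu> A * f A * gg A)"
  define C where "C Z = \<nu> Z * \<nu> (insert k Z) / (\<nu> Z + \<nu> (insert k Z)) *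
               (f (insert k Z) - f Z) * (gg (insert k Z) - gg Z)" for Z
  define \<kappa> where "\<kappa> = alpha\<^sup>2 * exp (- 6 * lam)"
  have sub: "{u, v} \<subseteq> {..<n}" "{u} \<subseteq> {..<n}" "{v} \<subseteq> {..<n}" "{} \<subseteq> {..<n}" using un vn by auto
  have Q0: "Q {} = S0" unfolding Q_reindex[OF sub(4)] S0_def P_def kI' by simp
  have Q1: "Q {u} = S1" unfolding Q_reindex[OF sub(2)] S1_def P_def kI' f_def by simp
  have Q2: "Q {v} = S2" unfolding Q_reindex[OF sub(3)] S2_def P_def kI' gg_def by simp
  have Q3: "Q {u, v} = S3" unfolding Q_reindex[OF sub(1)] S3_def P_def kI' f_def gg_def
    using uv by (simp add: mult.assoc)
  have S0pos: "0 < S0" unfolding S0_def P_def by (intro sum_pos) (auto intro: nu_pos simp: finI)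
  have dec: "S0 * (\<Sum>Z\<in>Pow I. C Z) \<le> S0 * S3 - S1 * S2"
    unfolding S0_def S1_def S2_def S3_def C_def P_def
  proof (rule decomp[OF finI kI])
    fix A B assume "A \<subseteq> insert k I" "B \<subseteq> insert k I"
    then show "\<nu> A * \<nu> B \<le> \<nu> (A \<union> B) * \<nu> (A \<inter> B)" using nu_lsm unfolding lsm_def kI' by blast
  qed (auto simp: f_def gg_def intro: nu_pos Lu_mono)
  have Cb: "(\<nu> Z + \<nu> (insert k Z)) * \<kappa> \<le> C Z" if "Z \<in> Pow I" for Z
  proof -
    have kZ: "k \<notin> Z" using that kI by auto
    define \<delta> where "\<delta> = 2 * alpha * exp (- 2 * lam)"
    have "(\<nu> Z + \<nu> (insert k Z)) * (\<delta> * \<delta> / (4 * exp (2 * lam))) \<le> C Z"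
      unfolding C_def
    proof (rule C_bound)
      show "0 < \<nu> Z" "0 < \<nu> (insert k Z)" by (rule nu_pos)+
      show "\<nu> Z \<le> exp (2 * lam) * \<nu> (insert k Z)" "\<nu> (insert k Z) \<le> exp (2 * lam) * \<nu> Z"
        using nu_ratio[OF kZ] by auto
      show "0 \<le> \<delta>" unfolding \<delta>_def using apos by simp
      show "\<delta> \<le> f (insert k Z) - f Z" unfolding \<delta>_def f_def by (rule delta_bound[OF un Juk kZ])
      show "\<delta> \<le> gg (insert k Z) - gg Z" unfolding \<delta>_def gg_def by (rule delta_bound[OF vn Jvk kZ])
    qed
    moreover have "\<delta> * \<delta> / (4 * exp (2 * lam)) = \<kappa>"
    proof -
      have "exp (- 2 * lam) * exp (- 2 * lam) = exp (- 6 * lam) * exp (2 * lam)"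
        by (simp add: exp_add[symmetric])
      then show ?thesis unfolding \<delta>_def \<kappa>_def by (simp add: power2_eq_square field_simps)
    qed
    ultimately show ?thesis by simp
  qed
  have "\<kappa> * S0 = (\<Sum>Z\<in>Pow I. (\<nu> Z + \<nu> (insert k Z)) * \<kappa>)"
    unfolding S0_def P_def sum_Pow_insert[OF finI kI] by (simp add: sum_distrib_left mult.commute)
  also have "\<dots> \<le> (\<Sum>Z\<in>Pow I. C Z)" by (rule sum_mono) (rule Cb)
  finally have "\<kappa> * S0 \<le> (\<Sum>Z\<in>Pow I. C Z)" .
  then have "S0 * (\<kappa> * S0) \<le> S0 * S3 - S1 * S2" using dec S0pos
    by (meson mult_left_mono less_imp_le order_trans)
  then have "\<kappa> \<le> (S0 * S3 - S1 * S2) / (S0 * S0)" using S0pos by (simp add: field_simps)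
  also have "\<dots> = S3 / S0 - (S1 / S0) * (S2 / S0)" using S0pos by (simp add: field_simps)
  finally show ?thesis unfolding condCov_eq Q0 Q1 Q2 Q3 \<kappa>_def .
qed

lemma lam_nonneg: "0 \<le> lam" using Lu_bound[OF un, of "{}"] by linarith

lemma condCov_bound12: "alpha\<^sup>2 * exp (- 12 * lam) \<le> rbm_condCov n m J h g u v S s"
proof -
  have "exp (- 12 * lam) \<le> exp (- 6 * lam)" using lam_nonneg by simp
  then have "alpha\<^sup>2 * exp (- 12 * lam) \<le> alpha\<^sup>2 * exp (- 6 * lam)" by (intro mult_left_mono) auto
  then show ?thesis using condCov_bound by linarith
qed

end

theorem mainTheorem3:
  fixes n m :: nat and J :: "nat \<Rightarrow> nat \<Rightarrow> real" and h g :: "nat \<Rightarrow> real"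
    and alpha lam :: real and u v k :: nat and S :: "nat set"
  assumes "locally_consistent n m J h g alpha lam"
    and "alpha > 0"
    and "u < n" and "v < n" and "u \<noteq> v"
    and "k < m" and "J u k \<noteq> 0" and "J v k \<noteq> 0"
    and "S \<subseteq> {..<n} - {u, v}"
  shows "rbm_avgCov n m J h g u v S \<ge> alpha\<^sup>2 * exp (- 12 * lam)"
proof -
  define \<kappa> where "\<kappa> = alpha\<^sup>2 * exp (- 12 * lam)"
  have cb: "\<kappa> \<le> rbm_condCov n m J h g u v S x" if "x \<in> spins n" for x
  proof -
    interpret rbmc n m J h g alpha lam u v k S x
      using assms that by unfold_locales auto
    show ?thesis unfolding \<kappa>_def by (rule condCov_bound12)
  qed
  have Zp: "0 < rbm_Z n m J h g" by (rule Z_pos)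
  have pnn: "0 \<le> rbm_pX n m J h g x" for x
    unfolding rbm_pX_def using Zp by (intro divide_nonneg_pos sum_nonneg) (auto simp: rbm_weight_def)
  have p1: "(\<Sum>x\<in>spins n. rbm_pX n m J h g x) = 1"
    unfolding rbm_pX_def sum_divide_distrib[symmetric] rbm_Z_def[symmetric] using Zp by simp
  have "\<kappa> = (\<Sum>x\<in>spins n. rbm_pX n m J h g x * \<kappa>)" unfolding sum_distrib_right[symmetric] p1 by simp
  also have "\<dots> \<le> (\<Sum>x\<in>spins n. rbm_pX n m J h g x * rbm_condCov n m J h g u v S x)"
    by (intro sum_mono mult_left_mono cb pnn)
  finally show ?thesis unfolding rbm_avgCov_def \<kappa>_def .
qed

end
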